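(* Let $m$ be an odd positive integer and $\ell=\lceil\log_2 m\rceil$. If $\mathfrak K(m)>2^\ell+1$, then $\mathbf t_{m+1}\mathbf t_{m+2}=11$ and $\mathbf t_{2m+1}\mathbf t_{2m+2}=10$.
   Context: The Thue–Morse word is $\mathbf t=\mathbf t_1\mathbf t_2\cdots$ where $\mathbf t_i\in\{0,1\}$ has the parity of the number of $1$'s in the binary expansion of $i-1$. For positive integers $\alpha\le\beta$, $\langle\alpha,\beta\rangle=\mathbf t_\alpha\cdots\mathbf t_\beta$. A $k$-anti-power is a word $w_1\cdots w_k$ with $w_1,\dots,w_k$ pairwise distinct words of equal length. For a positive integer $m$, $\mathfrak K(m)$ is the smallest positive integer $k$ such that the prefix $\langle 1,km\rangle$ of $\mathbf t$ is not a $k$-anti-power. *)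

theory Defs
  imports Complex_Main
begin

fun ones :: "nat \<Rightarrow> nat" where
  "ones n = (if n = 0 then 0 else n mod 2 + ones (n div 2))"

(* Thue-Morse word, 1-indexed: t i for i \<ge> 1 *)
definition tm :: "nat \<Rightarrow> nat" where
  "tm i = ones (i - 1) mod 2"

definition seg :: "nat \<Rightarrow> nat \<Rightarrow> nat list" where
  "seg \<alpha> \<beta> = map tm [\<alpha>..<\<beta> + 1]"

definition is_antipower_prefix :: "nat \<Rightarrow> nat \<Rightarrow> bool" where
  "is_antipower_prefix k m = distinct (map (\<lambda>j. seg (j * m + 1) ((j + 1) * m)) [0..<k])"

definition K :: "nat \<Rightarrow> nat" where
  "K m = (LEAST k. 0 < k \<and> \<not> is_antipower_prefix k m)"

end

theory Submission
  imports Defs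
begin

declare ones.simps[simp del]

lemma ones_0[simp]: "ones 0 = 0" by (simp add: ones.simps)

lemma ones_double: "ones (2*n) = ones n"
  by (cases "n = 0") (simp, subst ones.simps, simp)

lemma ones_double1: "ones (2*n+1) = ones n + 1"
  by (subst ones.simps) simp

lemma ones_1[simp]: "ones (Suc 0) = 1"
  using ones_double1[of 0] by simp

lemma ones_split: "b < 2^k \<Longrightarrow> ones (2^k * a + b) = ones a + ones b"
proof (induction k arbitrary: a b)
  case 0 then show ?case by simp
next
  case (Suc k)
  obtain c r where b: "b = 2*c + r" "r < 2" by (metis div_mult_mod_eq mod_less_divisor zero_less_numeral mult.commute)
  have c: "c < 2^k" using Suc.prems b by auto
  have eq: "2^Suc k * a + b = 2 * (2^k*a + c) + r" using b by simp
  show ?case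
  proof (cases "r = 0")
    case True
    have "ones (2^Suc k * a + b) = ones (2*(2^k*a+c))" using eq True by (simp only: add_0_right)
    also have "\<dots> = ones (2^k*a+c)" by (rule ones_double)
    also have "\<dots> = ones a + ones b" using Suc.IH[OF c] b True ones_double[of c] by simp
    finally show ?thesis .
  next
    case False
    then have "r = 1" using b by auto
    have "ones (2^Suc k * a + b) = ones (2*(2^k*a+c)+1)" using eq \<open>r = 1\<close> by (simp only:)
    also have "\<dots> = ones (2^k*a+c) + 1" by (rule ones_double1)
    also have "\<dots> = ones a + ones b" using Suc.IH[OF c] b \<open>r = 1\<close> ones_double1[of c] by simp
    finally show ?thesis .
  qed
qed

definition T :: "nat \<Rightarrow> nat" where "T n = ones n mod 2"

lemma seg_block: "seg (j * m + 1) ((j + 1) * m) = map (\<lambda>i. T (j*m+i)) [0..<m]"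
proof -
  have "[j * m + 1..<(j + 1) * m + 1] = map (\<lambda>i. i + (j*m+1)) [0..<m]"
    by (metis add.commute add.left_neutral map_add_upt add_mult_distrib mult_1 add.assoc)
  then show ?thesis unfolding seg_def by (simp add: tm_def T_def add.commute)
qed

lemma block_eq:
  assumes "\<And>i. i < m \<Longrightarrow> T (j*m+i) = T (j'*m+i)"
  shows "seg (j * m + 1) ((j + 1) * m) = seg (j' * m + 1) ((j' + 1) * m)"
  unfolding seg_block using assms by simp

lemma not_anti:
  assumes "a < b" "b < k"
    and "seg (a * m + 1) ((a + 1) * m) = seg (b * m + 1) ((b + 1) * m)"
  shows "\<not> is_antipower_prefix k m"
proof
  assume "is_antipower_prefix k m"
  then have "inj_on (\<lambda>j. seg (j * m + 1) ((j + 1) * m)) {0..<k}"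
    unfolding is_antipower_prefix_def by (simp add: distinct_map)
  moreover have "a \<in> {0..<k}" "b \<in> {0..<k}" using assms by auto
  ultimately have "a = b" using assms(3) inj_onD[of _ "{0..<k}" a b] by blast
  then show False using assms(1) by simp
qed

lemma exists_nonanti: "\<exists>k. 0 < k \<and> \<not> is_antipower_prefix k m"
proof (rule ccontr)
  assume "\<not> ?thesis"
  then have d: "is_antipower_prefix (2^m+1) m" by auto
  let ?f = "\<lambda>j. seg (j * m + 1) ((j + 1) * m)"
  let ?S = "{xs. set xs \<subseteq> {0::nat,1} \<and> length xs = m}"
  have mem: "?f j \<in> ?S" for j
    by (simp only: seg_block) (auto simp: T_def)
  have sub: "set (map ?f [0..<2^m+1]) \<subseteq> ?S"
    using mem by auto
  have "card (set (map ?f [0..<2^m+1])) = 2^m+1"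
  proof -
    have "distinct (map ?f [0..<2^m+1])" using d unfolding is_antipower_prefix_def .
    then have "card (set (map ?f [0..<2^m+1])) = length (map ?f [0..<2^m+1])" by (rule distinct_card)
    then show ?thesis by simp
  qed
  moreover have "card ?S = 2^m" by (simp add: card_lists_length_eq numeral_2_eq_2)
  moreover have "finite ?S" by (simp add: finite_lists_length_eq)
  ultimately show False using card_mono[OF _ sub] by simp
qed

theorem lemma3:
  fixes m :: nat
  assumes "odd m" and "0 < m"
    and "K m > 2 ^ nat \<lceil>log 2 (real m)\<rceil> + 1"
  shows "tm (m + 1) = 1 \<and> tm (m + 2) = 1 \<and> tm (2 * m + 1) = 1 \<and> tm (2 * m + 2) = 0"
proof -
  define l where "l = nat \<lceil>log 2 (real m)\<rceil>"
  define L where "L = (2::nat)^l"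
  have anti: "is_antipower_prefix (L+1) m"
  proof (rule ccontr)
    assume "\<not> is_antipower_prefix (L+1) m"
    then have "K m \<le> L + 1" unfolding K_def by (intro Least_le) simp
    then show False using assms(3) unfolding L_def l_def by simp
  qed
  have mL: "m \<le> L"
  proof -
    have "real m = 2 powr (log 2 (real m))" using assms(2) by simp
    also have "\<dots> \<le> 2 powr (real l)" unfolding l_def
      by (intro powr_mono) (auto, linarith)
    also have "\<dots> = real L" unfolding L_def by (simp add: powr_realpow)
    finally show ?thesis by simp
  qed
  have tms: "tm (m + 1) = T m" "tm (m + 2) = T (m+1)" "tm (2*m+1) = T m"
    "tm (2*m+2) = (T m + 1) mod 2"
  proof -
    show "tm (m + 1) = T m" by (simp add: tm_def T_def)
    show "tm (m + 2) = T (m+1)" by (simp add: tm_def T_def)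
    show "tm (2*m+1) = T m" by (simp add: tm_def T_def ones_double)
    have "tm (2*m+2) = ones (2*m+1) mod 2" by (simp add: tm_def)
    then show "tm (2*m+2) = (T m + 1) mod 2" using ones_double1[of m] by (simp add: T_def mod_Suc_eq)
  qed
  have key: "T m = 1 \<and> T (m+1) = 1"
  proof (cases "m = 1")
    case True
    have "ones 1 = 1" using ones_double1[of 0] by simp
    moreover have "ones (Suc (Suc 0)) = 1" using ones_double[of 1] \<open>ones 1 = 1\<close> by (simp add: numeral_2_eq_2)
    ultimately show ?thesis using True by (simp add: T_def)
  next
    case False
    then have m3: "m \<ge> 3" using assms(1,2) by presburger
    have l1: "l \<ge> 1"
    proof (rule ccontr)
      assume "\<not> l \<ge> 1" then have "L = 1" unfolding L_def by simp
      then show False using mL m3 by simp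
    qed
    have TL: "T (L*m + i) = (T m + T i) mod 2" if "i < m" for i
      using ones_split[of i l m] that mL unfolding L_def T_def by (simp add: mod_add_eq)
    have Tm1: "T m = 1"
    proof (rule ccontr)
      assume "T m \<noteq> 1" then have "T m = 0" unfolding T_def by simp
      then have "seg (0 * m + 1) ((0 + 1) * m) = seg (L * m + 1) ((L + 1) * m)"
      proof (intro block_eq)
        fix i assume "i < m"
        then show "T (0*m+i) = T (L*m+i)" using TL[of i] \<open>T m = 0\<close> by (simp add: T_def)
      qed
      then have "\<not> is_antipower_prefix (L+1) m"
        by (rule not_anti[rotated 2]) (use mL m3 in auto)
      then show False using anti by simp
    qed
    have Tm2: "T (m+1) = 1"
    proof (rule ccontr)
      assume a: "T (m+1) \<noteq> 1"
      obtain q where q: "m = 2*q+1" using assms(1) oddE by blast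
      define H where "H = (2::nat)^(l-1)"
      have LH: "L = 2*H"
      proof -
        have "l = Suc (l-1)" using l1 by simp
        then show ?thesis unfolding L_def H_def by (metis power_Suc)
      qed
      have "ones m = ones q + 1" using q ones_double1[of q] by simp
      then have Tq: "T q = 0" using Tm1 unfolding T_def by presburger
      have "m+1 = 2*(q+1)" using q by simp
      then have "ones (m+1) = ones (q+1)" by (simp only: ones_double)
      then have Tq1: "T (q+1) = 0" using a unfolding T_def by presburger
      have Hm: "H*m = L*q + H" using q LH by (simp add: algebra_simps)
      have TH: "T (H*m + i) = T (L*m + i)" if "i < m" for i
      proof (cases "i < H")
        case True
        have "ones (H*m+i) = ones q + ones (H+i)"
          using ones_split[of "H+i" l q] True LH unfolding L_def Hm
          by (simp add: algebra_simps)
        moreover have "ones (H+i) = 1 + ones i"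
          using ones_split[of i "l-1" 1] True unfolding H_def by simp
        ultimately show ?thesis using TL[OF that] Tq Tm1 unfolding T_def
          by presburger
      next
        case False
        have eq1: "H*m + i = L*(q+1) + (i - H)" using Hm False LH by simp
        have iHH: "i - H < H" using that mL LH by linarith
        then have iH2: "i - H < 2^(l-1)" by (simp add: H_def)
        have iHL: "i - H < 2^l" using iHH LH unfolding L_def by linarith
        have "ones (H*m+i) = ones (L*(q+1) + (i - H))" using eq1 by (rule arg_cong)
        also have "\<dots> = ones (q+1) + ones (i-H)" unfolding L_def by (rule ones_split[OF iHL])
        finally have o1: "ones (H*m+i) = ones (q+1) + ones (i-H)" .
        have iH: "i = 2^(l-1)*1 + (i-H)" using False unfolding H_def by simp
        have "ones i = ones (2^(l-1)*1 + (i-H))" using iH by (rule arg_cong)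
        also have "\<dots> = ones 1 + ones (i-H)" by (rule ones_split[OF iH2])
        finally have o2: "ones i = 1 + ones (i-H)" by simp
        have e1: "T (H*m+i) = T (i-H)" using o1 Tq1 unfolding T_def by (metis mod_add_left_eq add_0)
        have e2: "T (L*m+i) = (1 + T i) mod 2" using TL[OF that] Tm1 by simp
        have e3: "T i = (1 + T (i-H)) mod 2" using o2 unfolding T_def by (simp add: mod_Suc_eq)
        have "T (i-H) < 2" unfolding T_def by simp
        then show ?thesis using e1 e2 e3 by (cases "T (i-H)") auto
      qed
      then have "seg (H * m + 1) ((H + 1) * m) = seg (L * m + 1) ((L + 1) * m)"
        by (intro block_eq) auto
      then have "\<not> is_antipower_prefix (L+1) m"
        by (rule not_anti[rotated 2]) (use LH in \<open>auto simp: H_def\<close>)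
      then show False using anti by simp
    qed
    show ?thesis using Tm1 Tm2 by simp
  qed
  show ?thesis using tms key by simp
qed

end
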